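(* Let $H_1$ and $H_2$ be vertex-disjoint connected graphs, each with at least two vertices, let $w\in V(H_1)$ and $v\in V(H_2)$, and let $k=\varepsilon_{H_1}(w)$. Let $l\geqslant 1$ be an integer with $k\geqslant l+1$. Let $G$ be the graph obtained from $H_1\cup H_2$ by adding the edge $wv$ and a path $vu_1u_2\ldots u_l$, where $u_1,\ldots,u_l$ are new vertices (so $wv$ is a cut edge of $G$ and $vu_1\ldots u_l$ is a pendant path at $v$). Let $$G'=G-\{vx: x\in N_{H_2}(v)\}+\{wx: x\in N_{H_2}(v)\}.$$ Then $\xi^{ee}(G)<\xi^{ee}(G')$.
   Context: All graphs are finite, simple and connected. For a vertex $x$ of a connected graph $G$, $\varepsilon_G(x)$ is the eccentricity of $x$ (the largest distance from $x$ to a vertex of $G$) and $d_G(x)$ its degree; $N_H(v)$ is the set of neighbours of $v$ in $H$. The total reciprocal edge-eccentricity of $G$ is $\xi^{ee}(G)=\sum_{uv\in E(G)}\left(\frac{1}{\varepsilon_G(u)}+\frac{1}{\varepsilon_G(v)}\right)=\sum_{x\in V(G)}\frac{d_G(x)}{\varepsilon_G(x)}$. *)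

theory Defs
  imports Complex_Main
begin

definition simple_graph :: "'a set \<Rightarrow> 'a set set \<Rightarrow> bool" where
  "simple_graph V E \<longleftrightarrow> finite V \<and>
     (\<forall>e\<in>E. \<exists>x y. x \<in> V \<and> y \<in> V \<and> x \<noteq> y \<and> e = {x, y})"

definition walk :: "'a set \<Rightarrow> 'a set set \<Rightarrow> 'a list \<Rightarrow> bool" where
  "walk V E xs \<longleftrightarrow> xs \<noteq> [] \<and> set xs \<subseteq> V \<and>
     (\<forall>i. Suc i < length xs \<longrightarrow> {xs ! i, xs ! Suc i} \<in> E)"

definition connected_graph :: "'a set \<Rightarrow> 'a set set \<Rightarrow> bool" where
  "connected_graph V E \<longleftrightarrow> V \<noteq> {} \<and>
     (\<forall>x\<in>V. \<forall>y\<in>V. \<exists>xs. walk V E xs \<and> hd xs = x \<and> last xs = y)"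

definition dist :: "'a set \<Rightarrow> 'a set set \<Rightarrow> 'a \<Rightarrow> 'a \<Rightarrow> nat" where
  "dist V E x y = (LEAST n. \<exists>xs. walk V E xs \<and> hd xs = x \<and> last xs = y \<and> length xs = Suc n)"

definition ecc :: "'a set \<Rightarrow> 'a set set \<Rightarrow> 'a \<Rightarrow> nat" where
  "ecc V E x = Max (dist V E x ` V)"

definition nbrs :: "'a set set \<Rightarrow> 'a \<Rightarrow> 'a set" where
  "nbrs E x = {y. {x, y} \<in> E}"

definition degree :: "'a set set \<Rightarrow> 'a \<Rightarrow> nat" where
  "degree E x = card (nbrs E x)"

definition xi_ee :: "'a set \<Rightarrow> 'a set set \<Rightarrow> real" where
  "xi_ee V E = (\<Sum>x\<in>V. real (degree E x) / real (ecc V E x))"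

end

theory Submission
  imports Defs
begin


lemma walk_succ: "walk V E xs \<longleftrightarrow> xs \<noteq> [] \<and> set xs \<subseteq> V \<and> successively (\<lambda>a b. {a,b} \<in> E) xs"
  unfolding walk_def successively_conv_nth by auto

definition wk :: "'a set \<Rightarrow> 'a set set \<Rightarrow> 'a \<Rightarrow> 'a \<Rightarrow> nat \<Rightarrow> bool" where
  "wk V E x y n \<longleftrightarrow> (\<exists>xs. walk V E xs \<and> hd xs = x \<and> last xs = y \<and> length xs \<le> Suc n)"

lemma wk_dist: assumes "wk V E x y n" shows "dist V E x y \<le> n"
proof -
  obtain xs where xs: "walk V E xs" "hd xs = x" "last xs = y" "length xs \<le> Suc n"
    using assms unfolding wk_def by blast
  have ne: "xs \<noteq> []" using xs(1) unfolding walk_def by auto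
  have "\<exists>ys. walk V E ys \<and> hd ys = x \<and> last ys = y \<and> length ys = Suc (length xs - 1)"
    using xs ne by (intro exI[of _ xs]) auto
  then have "dist V E x y \<le> length xs - 1" unfolding dist_def by (rule Least_le)
  then show ?thesis using xs(4) by simp
qed

lemma wk_refl: "x \<in> V \<Longrightarrow> wk V E x x 0"
  unfolding wk_def by (intro exI[of _ "[x]"]) (auto simp: walk_succ)

lemma wk_edge: "{x,y} \<in> E \<Longrightarrow> x \<in> V \<Longrightarrow> y \<in> V \<Longrightarrow> wk V E x y 1"
  unfolding wk_def by (intro exI[of _ "[x,y]"]) (auto simp: walk_succ)

lemma wk_mono: "wk V E x y a \<Longrightarrow> a \<le> b \<Longrightarrow> wk V E x y b"
proof -
  assume "wk V E x y a" "a \<le> b"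
  then obtain xs where "walk V E xs" "hd xs = x" "last xs = y" "length xs \<le> Suc a" unfolding wk_def by blast
  then show ?thesis unfolding wk_def using \<open>a \<le> b\<close> by (intro exI[of _ xs]) auto
qed

lemma wk_sym: assumes "wk V E x y n" shows "wk V E y x n"
proof -
  obtain xs where xs: "walk V E xs" "hd xs = x" "last xs = y" "length xs \<le> Suc n"
    using assms unfolding wk_def by blast
  have "walk V E (rev xs)" using xs(1) unfolding walk_succ by (auto simp: insert_commute)
  then show ?thesis unfolding wk_def using xs
    by (intro exI[of _ "rev xs"]) (auto simp: hd_rev last_rev walk_succ)
qed

lemma wk_trans: assumes "wk V E x y a" "wk V E y z b" shows "wk V E x z (a + b)"
proof -
  obtain xs where xs: "walk V E xs" "hd xs = x" "last xs = y" "length xs \<le> Suc a"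
    using assms(1) unfolding wk_def by blast
  obtain ys where ys: "walk V E ys" "hd ys = y" "last ys = z" "length ys \<le> Suc b"
    using assms(2) unfolding wk_def by blast
  have xne: "xs \<noteq> []" and yne: "ys \<noteq> []" using xs ys by (auto simp: walk_succ)
  obtain y' ys' where ysc: "ys = y' # ys'" using yne by (cases ys) auto
  have "walk V E (xs @ ys')"
  proof -
    have "successively (\<lambda>a b. {a,b} \<in> E) (xs @ ys')"
    proof (cases ys')
      case Nil then show ?thesis using xs(1) by (simp add: walk_succ)
    next
      case (Cons c cs)
      have "successively (\<lambda>a b. {a,b} \<in> E) (y' # ys')" using ys(1) ysc by (simp add: walk_succ)
      then have "{y', c} \<in> E" "successively (\<lambda>a b. {a,b} \<in> E) ys'" using Cons by auto
      moreover have "last xs = y'" using xs(3) ys(2) ysc by simp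
      ultimately show ?thesis using xs(1) xne Cons by (auto simp: walk_succ successively_append_iff)
    qed
    then show ?thesis using xs(1) ys(1) ysc xne by (auto simp: walk_succ)
  qed
  moreover have "hd (xs @ ys') = x" using xs xne by simp
  moreover have "last (xs @ ys') = z" using ys ysc xs(3) by (cases "ys' = []") auto
  moreover have "length (xs @ ys') \<le> Suc (a + b)" using xs(4) ys(4) ysc by simp
  ultimately show ?thesis unfolding wk_def by blast
qed

lemma wk_map:
  assumes "wk V E x y n" "\<And>a b. {a,b} \<in> E \<Longrightarrow> a \<in> V \<Longrightarrow> b \<in> V \<Longrightarrow> {f a, f b} \<in> E'"
    "\<And>a. a \<in> V \<Longrightarrow> f a \<in> V'"
  shows "wk V' E' (f x) (f y) n"
proof -
  obtain xs where xs: "walk V E xs" "hd xs = x" "last xs = y" "length xs \<le> Suc n"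
    using assms(1) unfolding wk_def by blast
  have ne: "xs \<noteq> []" using xs by (auto simp: walk_succ)
  have s: "successively (\<lambda>a b. {a,b} \<in> E) xs" "set xs \<subseteq> V" using xs(1) by (auto simp: walk_succ)
  have "successively (\<lambda>a b. {f a, f b} \<in> E') xs"
    using s
  proof (induction xs rule: induct_list012)
    case (3 a b zs) then show ?case using assms(2) by auto
  qed auto
  then have "walk V' E' (map f xs)" using s ne assms(3) by (auto simp: walk_succ successively_map)
  then show ?thesis unfolding wk_def using xs ne by (intro exI[of _ "map f xs"]) (auto simp: hd_map last_map)
qed

definition reach :: "'a set \<Rightarrow> 'a set set \<Rightarrow> 'a \<Rightarrow> 'a \<Rightarrow> bool" where
  "reach V E x y \<longleftrightarrow> (\<exists>n. wk V E x y n)"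

lemma wk_reach: "wk V E x y n \<Longrightarrow> reach V E x y" unfolding reach_def by blast

lemma reach_wk_dist: assumes "reach V E x y" shows "wk V E x y (dist V E x y)"
proof -
  obtain n where "wk V E x y n" using assms unfolding reach_def by blast
  then obtain xs where xs: "walk V E xs" "hd xs = x" "last xs = y"
    unfolding wk_def by blast
  have ne: "xs \<noteq> []" using xs by (auto simp: walk_succ)
  have "\<exists>n ys. walk V E ys \<and> hd ys = x \<and> last ys = y \<and> length ys = Suc n"
    using xs ne by (intro exI[of _ "length xs - 1"] exI[of _ xs]) auto
  then have "\<exists>ys. walk V E ys \<and> hd ys = x \<and> last ys = y \<and> length ys = Suc (dist V E x y)"
    unfolding dist_def by (rule LeastI_ex)
  then show ?thesis unfolding wk_def by auto
qed

lemma conn_reach: "connected_graph V E \<Longrightarrow> x \<in> V \<Longrightarrow> y \<in> V \<Longrightarrow> reach V E x y"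
proof -
  assume a: "connected_graph V E" "x \<in> V" "y \<in> V"
  then obtain xs where "walk V E xs" "hd xs = x" "last xs = y" unfolding connected_graph_def by blast
  then have "wk V E x y (length xs)" unfolding wk_def by auto
  then show ?thesis unfolding reach_def by blast
qed

lemma walk_lip:
  assumes "walk V E xs" "\<And>a b. {a,b} \<in> E \<Longrightarrow> a \<in> V \<Longrightarrow> b \<in> V \<Longrightarrow> \<phi> b \<le> \<phi> a + 1"
  shows "\<phi> (last xs) \<le> \<phi> (hd xs) + int (length xs - 1)"
proof -
  have "xs \<noteq> [] \<Longrightarrow> set xs \<subseteq> V \<Longrightarrow> successively (\<lambda>a b. {a,b} \<in> E) xs \<Longrightarrow>
        \<phi> (last xs) \<le> \<phi> (hd xs) + int (length xs - 1)"
  proof (induction xs)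
    case Nil then show ?case by simp
  next
    case (Cons a xs)
    show ?case
    proof (cases xs)
      case Nil then show ?thesis by simp
    next
      case (Cons b ys)
      have e: "{a, b} \<in> E" using Cons.prems Cons by simp
      have ih: "\<phi> (last xs) \<le> \<phi> (hd xs) + int (length xs - 1)"
        using Cons.IH Cons.prems Cons by (auto simp: successively_Cons)
      have "\<phi> b \<le> \<phi> a + 1" using assms(2)[OF e] Cons.prems Cons by auto
      then show ?thesis using ih Cons by simp
    qed
  qed
  then show ?thesis using assms(1) by (auto simp: walk_succ)
qed

lemma dist_lip:
  assumes "reach V E x y" "\<And>a b. {a,b} \<in> E \<Longrightarrow> a \<in> V \<Longrightarrow> b \<in> V \<Longrightarrow> \<phi> b \<le> \<phi> a + 1"
  shows "\<phi> y - \<phi> x \<le> int (dist V E x y)"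
proof -
  obtain xs where xs: "walk V E xs" "hd xs = x" "last xs = y" "length xs \<le> Suc (dist V E x y)"
    using reach_wk_dist[OF assms(1)] unfolding wk_def by blast
  have "\<phi> (last xs) \<le> \<phi> (hd xs) + int (length xs - 1)" by (rule walk_lip[OF xs(1) assms(2)])
  then show ?thesis using xs by auto
qed

lemma reach_sym: "reach V E x y \<Longrightarrow> reach V E y x"
  unfolding reach_def using wk_sym by metis
lemma reach_trans: "reach V E x y \<Longrightarrow> reach V E y z \<Longrightarrow> reach V E x z"
  unfolding reach_def using wk_trans by metis

lemma dist_sym: assumes "reach V E x y" shows "dist V E x y = dist V E y x"
  using wk_dist[OF wk_sym[OF reach_wk_dist[OF assms]]]
    wk_dist[OF wk_sym[OF reach_wk_dist[OF reach_sym[OF assms]]]] by simp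

lemma dist_pos: assumes "reach V E x y" "x \<noteq> y" shows "dist V E x y \<ge> 1"
proof (rule ccontr)
  assume "\<not> ?thesis"
  then have "dist V E x y = 0" by simp
  then have "wk V E x y 0" using reach_wk_dist[OF assms(1)] by simp
  then obtain xs where "walk V E xs" "hd xs = x" "last xs = y" "length xs \<le> 1"
    unfolding wk_def by auto
  then show False using assms(2) by (cases xs) (auto simp: walk_succ)
qed

lemma ecc_ge: "finite V \<Longrightarrow> z \<in> V \<Longrightarrow> dist V E x z \<le> ecc V E x"
  unfolding ecc_def by auto

lemma ecc_le: "finite V \<Longrightarrow> V \<noteq> {} \<Longrightarrow> (\<And>z. z \<in> V \<Longrightarrow> wk V E x z B) \<Longrightarrow> ecc V E x \<le> B"
proof -
  assume a: "finite V" "V \<noteq> {}" "\<And>z. z \<in> V \<Longrightarrow> wk V E x z B"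
  have "\<forall>z\<in>V. dist V E x z \<le> B"
  proof
    fix z assume "z \<in> V" then show "dist V E x z \<le> B" by (rule wk_dist[OF a(3)])
  qed
  then show ?thesis unfolding ecc_def using a(1,2) by simp
qed

lemma ecc_attained: "finite V \<Longrightarrow> V \<noteq> {} \<Longrightarrow> \<exists>z\<in>V. dist V E x z = ecc V E x"
proof -
  assume a: "finite V" "V \<noteq> {}"
  have "Max (dist V E x ` V) \<in> dist V E x ` V" using a by (intro Max_in) auto
  then show ?thesis unfolding ecc_def by auto
qed

lemma ecc_pos: "finite V \<Longrightarrow> z \<in> V \<Longrightarrow> reach V E x z \<Longrightarrow> x \<noteq> z \<Longrightarrow> ecc V E x \<ge> 1"
  using ecc_ge[of V z E x] dist_pos[of V E x z] by simp

lemma simple_edge: "simple_graph V E \<Longrightarrow> {a,b} \<in> E \<Longrightarrow> a \<in> V \<and> b \<in> V \<and> a \<noteq> b"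
  unfolding simple_graph_def by (auto simp: doubleton_eq_iff)

lemma simple_nbr:
  assumes "simple_graph V E" "connected_graph V E" "card V \<ge> 2" "x \<in> V"
  shows "\<exists>y. {x,y} \<in> E \<and> y \<in> V \<and> y \<noteq> x"
proof -
  have fin: "finite V" using assms(1) unfolding simple_graph_def by auto
  obtain z where z: "z \<in> V" "z \<noteq> x"
  proof -
    have "\<not> V \<subseteq> {x}" using assms(3) card_mono[of "{x}" V] by auto
    then show ?thesis using that by auto
  qed
  obtain xs where xs: "walk V E xs" "hd xs = x" "last xs = z"
    using assms(2) z assms(4) unfolding connected_graph_def by blast
  have "length xs \<ge> 2"
  proof (rule ccontr)
    assume "\<not> ?thesis"
    then have "length xs \<le> 1" by simp
    then show False using xs z by (cases xs) (auto simp: walk_succ)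
  qed
  then have e: "{xs!0, xs!1} \<in> E" and "xs ! 1 \<in> V" using xs(1) unfolding walk_def by (auto simp: nth_mem)
  moreover have "xs ! 0 = x" using xs(2) xs(1) by (cases xs) (auto simp: walk_succ)
  moreover have "xs ! 1 \<noteq> xs ! 0" using simple_edge[OF assms(1) e] by metis
  ultimately show ?thesis by auto
qed




lemma dist_edge: "reach V E x a \<Longrightarrow> {a,b} \<in> E \<Longrightarrow> a \<in> V \<Longrightarrow> b \<in> V \<Longrightarrow> dist V E x b \<le> dist V E x a + 1"
  by (rule wk_dist, rule wk_trans[OF reach_wk_dist wk_edge]) auto

lemma wk_sub: "wk V E x y n \<Longrightarrow> V \<subseteq> V' \<Longrightarrow> E \<subseteq> E' \<Longrightarrow> wk V' E' x y n"
  using wk_map[of V E x y n id E' V'] by auto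


locale gsetup =
  fixes V1 V2 :: "'a set" and E1 E2 :: "'a set set" and w v :: 'a
    and u :: "nat \<Rightarrow> 'a" and l k :: nat
  assumes s1: "simple_graph V1 E1" and c1: "connected_graph V1 E1" and card1: "card V1 \<ge> 2"
    and s2: "simple_graph V2 E2" and c2: "connected_graph V2 E2" and card2: "card V2 \<ge> 2"
    and disj: "V1 \<inter> V2 = {}"
    and wV1: "w \<in> V1" and vV2: "v \<in> V2"
    and kdef: "k = ecc V1 E1 w"
    and l1: "l \<ge> 1" and kl: "k \<ge> l + 1"
    and uinj: "inj_on u {1..l}" and uV: "u ` {1..l} \<inter> (V1 \<union> V2) = {}"
begin

definition "GV = V1 \<union> V2 \<union> u ` {1..l}"
definition "GE = E1 \<union> E2 \<union> {{w, v}, {v, u 1}} \<union> {{u i, u (Suc i)} | i. 1 \<le> i \<and> i < l}"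
definition "N = nbrs E2 v"
definition "GE' = (GE - {{v, x} | x. x \<in> N}) \<union> {{w, x} | x. x \<in> N}"
definition "D1 x = dist V1 E1 w x"
definition "D2 x = dist V2 E2 v x"
definition "m = ecc V2 E2 v"
definition "U = u ` {1..l}"
definition "ui t = inv_into {1..l} u t"

lemma fin1: "finite V1" using s1 unfolding simple_graph_def by auto
lemma fin2: "finite V2" using s2 unfolding simple_graph_def by auto
lemma finGV: "finite GV" unfolding GV_def using fin1 fin2 by auto
lemma GVne: "GV \<noteq> {}" unfolding GV_def using wV1 by auto
lemma wv: "w \<noteq> v" "w \<notin> V2" "v \<notin> V1" using disj wV1 vV2 by auto
lemma uin: "1 \<le> i \<Longrightarrow> i \<le> l \<Longrightarrow> u i \<notin> V1 \<and> u i \<notin> V2 \<and> u i \<in> GV \<and> u i \<in> U"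
proof -
  assume "1 \<le> i" "i \<le> l"
  then have a: "u i \<in> u ` {1..l}" by auto
  then show ?thesis using uV unfolding GV_def U_def by blast
qed
lemma ui_u: "1 \<le> i \<Longrightarrow> i \<le> l \<Longrightarrow> ui (u i) = i"
  unfolding ui_def using uinj by (auto intro: inv_into_f_f)
lemma u_eq: "1 \<le> i \<Longrightarrow> i \<le> l \<Longrightarrow> 1 \<le> j \<Longrightarrow> j \<le> l \<Longrightarrow> u i = u j \<longleftrightarrow> i = j"
  using inj_on_eq_iff[OF uinj, of i j] by auto
lemma GV_cases: "x \<in> GV \<Longrightarrow> x \<in> V1 \<or> x \<in> V2 \<or> (\<exists>i. 1 \<le> i \<and> i \<le> l \<and> x = u i)"
  unfolding GV_def by auto
lemma V1GV: "V1 \<subseteq> GV" and V2GV: "V2 \<subseteq> GV" unfolding GV_def by auto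
lemma N_sub: "N \<subseteq> V2 - {v}"
  unfolding N_def nbrs_def using simple_edge[OF s2] by auto
lemma e1: "{a,b} \<in> E1 \<Longrightarrow> a \<in> V1 \<and> b \<in> V1 \<and> a \<noteq> b" using simple_edge[OF s1] .
lemma e2: "{a,b} \<in> E2 \<Longrightarrow> a \<in> V2 \<and> b \<in> V2 \<and> a \<noteq> b" using simple_edge[OF s2] .

lemma GE_cases:
  assumes "{a,b} \<in> GE"
  shows "{a,b} \<in> E1 \<or> {a,b} \<in> E2 \<or> {a,b} = {w,v} \<or> {a,b} = {v, u 1} \<or>
         (\<exists>i. 1 \<le> i \<and> i < l \<and> {a,b} = {u i, u (Suc i)})"
  using assms unfolding GE_def by blast

lemma E1_GE: "E1 \<subseteq> GE" and E2_GE: "E2 \<subseteq> GE" and wv_GE: "{w,v} \<in> GE" and vu_GE: "{v, u 1} \<in> GE"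
  and uu_GE: "1 \<le> i \<Longrightarrow> i < l \<Longrightarrow> {u i, u (Suc i)} \<in> GE"
  unfolding GE_def by blast+

lemma GE'_keep: "e \<in> GE \<Longrightarrow> v \<notin> e \<Longrightarrow> e \<in> GE'"
  unfolding GE'_def by auto

lemma u1N: "u 1 \<notin> N" using N_sub uin[of 1] l1 by auto
lemma wN: "w \<notin> N" using N_sub wv by auto

lemma E1_GE': "E1 \<subseteq> GE'"
proof
  fix e assume "e \<in> E1"
  moreover then obtain a b where "e = {a,b}" using s1 unfolding simple_graph_def by blast
  ultimately show "e \<in> GE'" using GE'_keep E1_GE e1 wv by blast
qed
lemma wv_GE': "{w,v} \<in> GE'" unfolding GE'_def using wv_GE wN wv by (auto simp: doubleton_eq_iff)
lemma vu_GE': "{v,u 1} \<in> GE'" unfolding GE'_def using vu_GE u1N by (auto simp: doubleton_eq_iff)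
lemma uu_GE': "1 \<le> i \<Longrightarrow> i < l \<Longrightarrow> {u i, u (Suc i)} \<in> GE'"
  using GE'_keep[OF uu_GE] uin[of i] uin[of "Suc i"] vV2 by auto
lemma wN_GE': "x \<in> N \<Longrightarrow> {w,x} \<in> GE'" unfolding GE'_def by auto

lemma GE_sub: "e \<in> GE \<Longrightarrow> e \<subseteq> GV"
  unfolding GE_def GV_def using s1 s2 wV1 vV2 l1 kl unfolding simple_graph_def by fastforce
lemma GE'_sub: "e \<in> GE' \<Longrightarrow> e \<subseteq> GV"
  unfolding GE'_def using GE_sub N_sub wV1 V2GV V1GV by auto

lemma u_path: assumes "{v,u 1} \<in> F" "\<And>i. 1 \<le> i \<Longrightarrow> i < l \<Longrightarrow> {u i, u (Suc i)} \<in> F"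
  shows "1 \<le> i \<Longrightarrow> i \<le> l \<Longrightarrow> wk GV F v (u i) i"
proof (induction i)
  case 0 then show ?case by simp
next
  case (Suc i)
  show ?case
  proof (cases "i = 0")
    case True then show ?thesis using wk_edge[OF assms(1)] vV2 V2GV uin[of 1] l1 by auto
  next
    case False
    then have "wk GV F v (u i) i" using Suc by auto
    moreover have "wk GV F (u i) (u (Suc i)) 1" using wk_edge[OF assms(2)] uin[of i] uin[of "Suc i"] Suc False by auto
    ultimately show ?thesis using wk_trans by fastforce
  qed
qed

lemma upathG: "1 \<le> i \<Longrightarrow> i \<le> l \<Longrightarrow> wk GV GE v (u i) i"
  using u_path[OF vu_GE uu_GE] by blast
lemma upathG': "1 \<le> i \<Longrightarrow> i \<le> l \<Longrightarrow> wk GV GE' v (u i) i"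
  using u_path[OF vu_GE' uu_GE'] by blast

lemma H1G: "wk V1 E1 a b n \<Longrightarrow> wk GV GE a b n" by (rule wk_sub[OF _ V1GV E1_GE])
lemma H1G': "wk V1 E1 a b n \<Longrightarrow> wk GV GE' a b n" by (rule wk_sub[OF _ V1GV E1_GE'])
lemma H2G: "wk V2 E2 a b n \<Longrightarrow> wk GV GE a b n" by (rule wk_sub[OF _ V2GV E2_GE])

definition "sg x = (if x = v then w else x)"

lemma H2G': assumes h: "wk V2 E2 a b n" shows "wk GV GE' (sg a) (sg b) n"
proof (rule wk_map[OF h])
  fix a b assume ab: "{a,b} \<in> E2" "a \<in> V2" "b \<in> V2"
  show "{sg a, sg b} \<in> GE'"
  proof (cases "a = v \<or> b = v")
    case True
    then show ?thesis
    proof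
      assume "a = v" then have "b \<in> N" "b \<noteq> v" using ab e2 unfolding N_def nbrs_def by auto
      then show ?thesis using wN_GE' \<open>a = v\<close> unfolding sg_def by auto
    next
      assume "b = v" then have "a \<in> N" "a \<noteq> v" using ab e2 unfolding N_def nbrs_def by (auto simp: insert_commute)
      then show ?thesis using wN_GE' \<open>b = v\<close> unfolding sg_def by (auto simp: insert_commute)
    qed
  next
    case False then show ?thesis using GE'_keep E2_GE ab unfolding sg_def by auto
  qed
next
  fix a assume "a \<in> V2" then show "sg a \<in> GV" unfolding sg_def using V2GV wV1 V1GV by auto
qed

lemma reach1: "a \<in> V1 \<Longrightarrow> b \<in> V1 \<Longrightarrow> wk V1 E1 a b (dist V1 E1 a b)"
  by (rule reach_wk_dist[OF conn_reach[OF c1]])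
lemma reach2: "a \<in> V2 \<Longrightarrow> b \<in> V2 \<Longrightarrow> wk V2 E2 a b (dist V2 E2 a b)"
  by (rule reach_wk_dist[OF conn_reach[OF c2]])

lemma reachG_w: assumes "x \<in> GV" shows "reach GV GE x w"
proof -
  have "wk GV GE w v 1" using wk_edge[OF wv_GE] wV1 vV2 V1GV V2GV by blast
  then have wvG: "wk GV GE v w 1" by (rule wk_sym)
  consider "x \<in> V1" | "x \<in> V2" | i where "1 \<le> i" "i \<le> l" "x = u i" using GV_cases[OF assms] by blast
  then show ?thesis
  proof cases
    case 1 show ?thesis by (rule wk_reach[OF H1G[OF reach1[OF 1 wV1]]])
  next
    case 2 show ?thesis by (rule wk_reach[OF wk_trans[OF H2G[OF reach2[OF 2 vV2]] wvG]])
  next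
    case 3 show ?thesis using wk_reach[OF wk_trans[OF wk_sym[OF upathG[OF 3(1,2)]] wvG]] 3(3) by simp
  qed
qed

lemma reachG: "x \<in> GV \<Longrightarrow> y \<in> GV \<Longrightarrow> reach GV GE x y"
  by (rule reach_trans[OF reachG_w reach_sym[OF reachG_w]])

end



lemma dist_self: "x \<in> V \<Longrightarrow> dist V E x x = 0"
  using wk_dist[OF wk_refl[of x V E]] by simp

context gsetup
begin

lemma d1_lip: "x \<in> V1 \<Longrightarrow> {a,b} \<in> E1 \<Longrightarrow> dist V1 E1 x b \<le> dist V1 E1 x a + 1"
  using e1[of a b] by (intro dist_edge conn_reach[OF c1]) auto
lemma d2_lip: "x \<in> V2 \<Longrightarrow> {a,b} \<in> E2 \<Longrightarrow> dist V2 E2 x b \<le> dist V2 E2 x a + 1"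
  using e2[of a b] by (intro dist_edge conn_reach[OF c2]) auto

lemma lip_GE:
  fixes \<phi> :: "'a \<Rightarrow> int"
  assumes h1: "\<And>a b. {a,b} \<in> E1 \<Longrightarrow> \<phi> b \<le> \<phi> a + 1"
    and h2: "\<And>a b. {a,b} \<in> E2 \<Longrightarrow> \<phi> b \<le> \<phi> a + 1"
    and h3: "\<bar>\<phi> w - \<phi> v\<bar> \<le> 1" and h4: "\<bar>\<phi> v - \<phi> (u 1)\<bar> \<le> 1"
    and h5: "\<And>i. 1 \<le> i \<Longrightarrow> i < l \<Longrightarrow> \<bar>\<phi> (u i) - \<phi> (u (Suc i))\<bar> \<le> 1"
    and e: "{a,b} \<in> GE"
  shows "\<phi> b \<le> \<phi> a + 1"
proof -
  consider "{a,b} \<in> E1" | "{a,b} \<in> E2" | "{a,b} = {w,v}" | "{a,b} = {v, u 1}" |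
    i where "1 \<le> i" "i < l" "{a,b} = {u i, u (Suc i)}" using GE_cases[OF e] by blast
  then show ?thesis
  proof cases
    case 1 then show ?thesis by (rule h1)
  next
    case 2 then show ?thesis by (rule h2)
  next
    case 3 then show ?thesis using h3 by (auto simp: doubleton_eq_iff)
  next
    case 4 then show ?thesis using h4 by (auto simp: doubleton_eq_iff)
  next
    case 5 then show ?thesis using h5[OF 5(1,2)] by (auto simp: doubleton_eq_iff)
  qed
qed

lemma lowG:
  fixes \<phi> :: "'a \<Rightarrow> int"
  assumes "x \<in> GV" "z \<in> GV" "\<And>a b. {a,b} \<in> GE \<Longrightarrow> \<phi> b \<le> \<phi> a + 1"
  shows "\<phi> z - \<phi> x \<le> int (dist GV GE x z)"
  by (rule dist_lip[OF reachG[OF assms(1,2)]]) (rule assms(3))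

lemma D1w: "D1 w = 0" unfolding D1_def using dist_self[OF wV1] .
lemma D2v: "D2 v = 0" unfolding D2_def using dist_self[OF vV2] .
lemma D1k: "z \<in> V1 \<Longrightarrow> D1 z \<le> k" unfolding D1_def kdef using ecc_ge[OF fin1] .
lemma D2m: "z \<in> V2 \<Longrightarrow> D2 z \<le> m" unfolding D2_def m_def using ecc_ge[OF fin2] .
lemma z1: "\<exists>z\<in>V1. D1 z = k" unfolding D1_def kdef using ecc_attained[OF fin1] wV1 by blast
lemma z2: "\<exists>z\<in>V2. D2 z = m" unfolding D2_def m_def using ecc_attained[OF fin2] vV2 by blast

lemma D1_lip: "{a,b} \<in> E1 \<Longrightarrow> D1 b \<le> D1 a + 1" unfolding D1_def using d1_lip[OF wV1] .
lemma D2_lip: "{a,b} \<in> E2 \<Longrightarrow> D2 b \<le> D2 a + 1" unfolding D2_def using d2_lip[OF vV2] .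

lemma edge_notV1: "{a,b} \<in> E2 \<Longrightarrow> a \<notin> V1 \<and> b \<notin> V1" using e2 disj by blast
lemma edge_notV2: "{a,b} \<in> E1 \<Longrightarrow> a \<notin> V2 \<and> b \<notin> V2" using e1 disj by blast

lemma LB1: assumes x: "x \<in> V1" shows "ecc V1 E1 x \<le> ecc GV GE x"
proof -
  define \<phi> where "\<phi> t = (if t \<in> V1 then int (dist V1 E1 x t) else int (dist V1 E1 x w) + 1)" for t
  have lip: "\<phi> b \<le> \<phi> a + 1" if "{a,b} \<in> GE" for a b
  proof (rule lip_GE[OF _ _ _ _ _ that])
    fix a b assume "{a,b} \<in> E1" then show "\<phi> b \<le> \<phi> a + 1" using d1_lip[OF x, of a b] e1[of a b] unfolding \<phi>_def by simp
  next
    fix a b assume "{a,b} \<in> E2" then show "\<phi> b \<le> \<phi> a + 1" using edge_notV1[of a b] unfolding \<phi>_def by simp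
  next
    show "\<bar>\<phi> w - \<phi> v\<bar> \<le> 1" using wV1 wv unfolding \<phi>_def by simp
  next
    show "\<bar>\<phi> v - \<phi> (u 1)\<bar> \<le> 1" using wv uin[of 1] l1 unfolding \<phi>_def by simp
  next
    fix i assume "1 \<le> i" "i < l" then show "\<bar>\<phi> (u i) - \<phi> (u (Suc i))\<bar> \<le> 1"
      using uin[of i] uin[of "Suc i"] unfolding \<phi>_def by simp
  qed
  obtain z where z: "z \<in> V1" "dist V1 E1 x z = ecc V1 E1 x" using ecc_attained[OF fin1] x by blast
  have "\<phi> z - \<phi> x \<le> int (dist GV GE x z)" using lowG[OF _ _ lip] x z(1) V1GV by (meson subsetD)
  then have "dist V1 E1 x z \<le> dist GV GE x z" using x z dist_self[OF x] unfolding \<phi>_def by simp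
  then show ?thesis using z ecc_ge[OF finGV, of z GE x] V1GV by auto
qed

lemma LB2: assumes x: "x \<in> V2" shows "ecc V2 E2 x \<le> ecc GV GE x"
proof -
  define \<phi> where "\<phi> t = (if t \<in> V2 then int (dist V2 E2 x t) else int (dist V2 E2 x v) + 1)" for t
  have lip: "\<phi> b \<le> \<phi> a + 1" if "{a,b} \<in> GE" for a b
  proof (rule lip_GE[OF _ _ _ _ _ that])
    fix a b assume "{a,b} \<in> E2" then show "\<phi> b \<le> \<phi> a + 1" using d2_lip[OF x, of a b] e2[of a b] unfolding \<phi>_def by simp
  next
    fix a b assume "{a,b} \<in> E1" then show "\<phi> b \<le> \<phi> a + 1" using edge_notV2[of a b] unfolding \<phi>_def by simp
  next
    show "\<bar>\<phi> w - \<phi> v\<bar> \<le> 1" using vV2 wv unfolding \<phi>_def by simp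
  next
    show "\<bar>\<phi> v - \<phi> (u 1)\<bar> \<le> 1" using vV2 uin[of 1] l1 unfolding \<phi>_def by simp
  next
    fix i assume "1 \<le> i" "i < l" then show "\<bar>\<phi> (u i) - \<phi> (u (Suc i))\<bar> \<le> 1"
      using uin[of i] uin[of "Suc i"] unfolding \<phi>_def by simp
  qed
  obtain z where z: "z \<in> V2" "dist V2 E2 x z = ecc V2 E2 x" using ecc_attained[OF fin2] x by blast
  have "\<phi> z - \<phi> x \<le> int (dist GV GE x z)" using lowG[OF _ _ lip] x z(1) V2GV by (meson subsetD)
  then have "dist V2 E2 x z \<le> dist GV GE x z" using x z dist_self[OF x] unfolding \<phi>_def by simp
  then show ?thesis using z ecc_ge[OF finGV, of z GE x] V2GV by auto
qed

definition "\<phi>A t = (if t \<in> V1 then - int (D1 t) else if t \<in> V2 then 1 + int (D2 t) else 1 + int (ui t))"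
definition "\<phi>B t = (if t \<in> V2 then int (D2 t) else if t \<in> V1 then 1 + int (D1 t) else - int (ui t))"

lemma lipA: "{a,b} \<in> GE \<Longrightarrow> \<phi>A b \<le> \<phi>A a + 1"
proof (rule lip_GE)
  fix a b assume "{a,b} \<in> E1" then show "\<phi>A b \<le> \<phi>A a + 1"
    using D1_lip[of b a] e1[of a b] unfolding \<phi>A_def by (simp add: insert_commute)
next
  fix a b assume "{a,b} \<in> E2" then show "\<phi>A b \<le> \<phi>A a + 1"
    using D2_lip[of a b] e2[of a b] edge_notV1[of a b] unfolding \<phi>A_def by simp
next
  show "\<bar>\<phi>A w - \<phi>A v\<bar> \<le> 1" using wV1 vV2 wv D1w D2v unfolding \<phi>A_def by simp
next
  show "\<bar>\<phi>A v - \<phi>A (u 1)\<bar> \<le> 1" using vV2 wv uin[of 1] l1 D2v ui_u[of 1] unfolding \<phi>A_def by simp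
next
  fix i assume "1 \<le> i" "i < l" then show "\<bar>\<phi>A (u i) - \<phi>A (u (Suc i))\<bar> \<le> 1"
    using uin[of i] uin[of "Suc i"] ui_u[of i] ui_u[of "Suc i"] unfolding \<phi>A_def by simp
qed

lemma lipB: "{a,b} \<in> GE \<Longrightarrow> \<phi>B b \<le> \<phi>B a + 1"
proof (rule lip_GE)
  fix a b assume "{a,b} \<in> E2" then show "\<phi>B b \<le> \<phi>B a + 1"
    using D2_lip[of a b] e2[of a b] unfolding \<phi>B_def by simp
next
  fix a b assume "{a,b} \<in> E1" then show "\<phi>B b \<le> \<phi>B a + 1"
    using D1_lip[of a b] e1[of a b] edge_notV2[of a b] unfolding \<phi>B_def by simp
next
  show "\<bar>\<phi>B w - \<phi>B v\<bar> \<le> 1" using wV1 vV2 wv D1w D2v unfolding \<phi>B_def by simp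
next
  show "\<bar>\<phi>B v - \<phi>B (u 1)\<bar> \<le> 1" using vV2 wv uin[of 1] l1 D2v ui_u[of 1] unfolding \<phi>B_def by simp
next
  fix i assume "1 \<le> i" "i < l" then show "\<bar>\<phi>B (u i) - \<phi>B (u (Suc i))\<bar> \<le> 1"
    using uin[of i] uin[of "Suc i"] ui_u[of i] ui_u[of "Suc i"] unfolding \<phi>B_def by simp
qed

lemma dG_sym: "x \<in> GV \<Longrightarrow> z \<in> GV \<Longrightarrow> dist GV GE x z = dist GV GE z x"
  by (rule dist_sym[OF reachG])

lemma LB3: assumes x: "x \<in> V1" shows "D1 x + 1 + m \<le> ecc GV GE x"
proof -
  obtain z where z: "z \<in> V2" "D2 z = m" using z2 by blast
  have "\<phi>A z - \<phi>A x \<le> int (dist GV GE x z)" by (rule lowG[OF subsetD[OF V1GV x] subsetD[OF V2GV z(1)] lipA])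
  moreover have "z \<notin> V1" using z(1) disj by blast
  ultimately have "D1 x + 1 + m \<le> dist GV GE x z" using x z unfolding \<phi>A_def by auto
  then show ?thesis using ecc_ge[OF finGV, of z GE x] z V2GV by auto
qed

lemma LB4: assumes x: "x \<in> V1" shows "D1 x + 1 + l \<le> ecc GV GE x"
proof -
  have ul: "u l \<in> GV" "u l \<notin> V1" "u l \<notin> V2" using uin[of l] l1 by auto
  have "\<phi>A (u l) - \<phi>A x \<le> int (dist GV GE x (u l))" by (rule lowG[OF subsetD[OF V1GV x] ul(1) lipA])
  then have "D1 x + 1 + l \<le> dist GV GE x (u l)" using x ul ui_u[of l] l1 unfolding \<phi>A_def by auto
  then show ?thesis using ecc_ge[OF finGV, of "u l" GE x] ul by auto
qed

lemma LB5: assumes x: "x \<in> V2" shows "D2 x + 1 + k \<le> ecc GV GE x"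
proof -
  obtain z where z: "z \<in> V1" "D1 z = k" using z1 by blast
  have "\<phi>A x - \<phi>A z \<le> int (dist GV GE z x)" by (rule lowG[OF subsetD[OF V1GV z(1)] subsetD[OF V2GV x] lipA])
  moreover have "x \<notin> V1" using x disj by blast
  ultimately have "D2 x + 1 + k \<le> dist GV GE z x" using x z unfolding \<phi>A_def by auto
  moreover have "dist GV GE x z = dist GV GE z x" using dG_sym subsetD[OF V1GV z(1)] subsetD[OF V2GV x] by blast
  moreover have "dist GV GE x z \<le> ecc GV GE x" using ecc_ge[OF finGV subsetD[OF V1GV z(1)]] .
  ultimately show ?thesis by linarith
qed

lemma LB6: assumes i: "1 \<le> i" "i \<le> l" shows "i + 1 + k \<le> ecc GV GE (u i)"
proof -
  obtain z where z: "z \<in> V1" "D1 z = k" using z1 by blast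
  have ui: "u i \<in> GV" "u i \<notin> V1" "u i \<notin> V2" using uin[OF i] by auto
  have "\<phi>A (u i) - \<phi>A z \<le> int (dist GV GE z (u i))" by (rule lowG[OF subsetD[OF V1GV z(1)] ui(1) lipA])
  then have "i + 1 + k \<le> dist GV GE z (u i)" using ui z ui_u[OF i] unfolding \<phi>A_def by auto
  moreover have "dist GV GE (u i) z = dist GV GE z (u i)" using dG_sym subsetD[OF V1GV z(1)] ui(1) by blast
  moreover have "dist GV GE (u i) z \<le> ecc GV GE (u i)" using ecc_ge[OF finGV subsetD[OF V1GV z(1)]] .
  ultimately show ?thesis by linarith
qed

lemma LB7: assumes i: "1 \<le> i" "i \<le> l" shows "i + m \<le> ecc GV GE (u i)"
proof -
  obtain z where z: "z \<in> V2" "D2 z = m" using z2 by blast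
  have ui: "u i \<in> GV" "u i \<notin> V1" "u i \<notin> V2" using uin[OF i] by auto
  have "\<phi>B z - \<phi>B (u i) \<le> int (dist GV GE (u i) z)" by (rule lowG[OF ui(1) subsetD[OF V2GV z(1)] lipB])
  then have "i + m \<le> dist GV GE (u i) z" using ui z ui_u[OF i] unfolding \<phi>B_def by auto
  then show ?thesis using ecc_ge[OF finGV, of z GE "u i"] z V2GV by auto
qed

end



context gsetup
begin

lemma sg_v: "sg v = w" and sg_o: "z \<noteq> v \<Longrightarrow> sg z = z" unfolding sg_def by auto

lemma W_x1: "x \<in> V1 \<Longrightarrow> wk GV GE' x w (D1 x)"
  unfolding D1_def by (rule H1G'[OF wk_sym[OF reach1[OF wV1]]])
lemma W_1x: "x \<in> V1 \<Longrightarrow> wk GV GE' w x (D1 x)"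
  unfolding D1_def by (rule H1G'[OF reach1[OF wV1]])
lemma W_2x: assumes "x \<in> V2" shows "wk GV GE' w (sg x) (D2 x)"
  using H2G'[OF reach2[OF vV2 assms]] unfolding D2_def sg_v .
lemma W_x2: assumes "x \<in> V2" shows "wk GV GE' (sg x) w (D2 x)"
  by (rule wk_sym[OF W_2x[OF assms]])
lemma W_wv: "wk GV GE' w v 1" using wk_edge[OF wv_GE'] subsetD[OF V1GV wV1] subsetD[OF V2GV vV2] by blast
lemma W_vw: "wk GV GE' v w 1" by (rule wk_sym[OF W_wv])

lemma Wout: assumes z: "z \<in> GV" "z \<notin> V1" shows "wk GV GE' w z (max m (l+1))"
proof -
  consider "z \<in> V2" "z \<noteq> v" | "z = v" | i where "1 \<le> i" "i \<le> l" "z = u i"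
    using GV_cases[OF z(1)] z(2) by blast
  then show ?thesis
  proof cases
    case 1
    have "wk GV GE' w z (D2 z)" using W_2x[OF 1(1)] sg_o[OF 1(2)] by simp
    then show ?thesis by (rule wk_mono) (use D2m[OF 1(1)] in simp)
  next
    case 2 then show ?thesis using wk_mono[OF W_wv] by simp
  next
    case 3
    have "wk GV GE' w z (1 + i)" using wk_trans[OF W_wv upathG'[OF 3(1,2)]] 3(3) by simp
    then show ?thesis by (rule wk_mono) (use 3 in simp)
  qed
qed

lemma Wall: assumes z: "z \<in> GV" shows "wk GV GE' w z (max k m)"
proof (cases "z \<in> V1")
  case True then show ?thesis using wk_mono[OF W_1x[OF True]] D1k[OF True] by simp
next
  case False then show ?thesis using wk_mono[OF Wout[OF z False]] kl by simp
qed

lemma e1_le: assumes y: "y \<in> V1" shows "ecc V1 E1 y \<le> D1 y + k"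
proof (rule ecc_le[OF fin1])
  show "V1 \<noteq> {}" using wV1 by auto
next
  fix z assume z: "z \<in> V1"
  have "wk V1 E1 y z (D1 y + D1 z)" unfolding D1_def
    by (rule wk_trans[OF wk_sym[OF reach1[OF wV1 y]] reach1[OF wV1 z]])
  then show "wk V1 E1 y z (D1 y + k)" by (rule wk_mono) (use D1k[OF z] in simp)
qed

lemma UB1: assumes x: "x \<in> V1" shows "ecc GV GE' x \<le> max (ecc V1 E1 x) (D1 x + max m (l+1))"
proof (rule ecc_le[OF finGV GVne])
  fix z assume z: "z \<in> GV"
  show "wk GV GE' x z (max (ecc V1 E1 x) (D1 x + max m (l+1)))"
  proof (cases "z \<in> V1")
    case True
    have "wk GV GE' x z (dist V1 E1 x z)" by (rule H1G'[OF reach1[OF x True]])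
    then show ?thesis by (rule wk_mono) (use ecc_ge[OF fin1 True, of E1 x] in simp)
  next
    case False
    have "wk GV GE' x z (D1 x + max m (l+1))" by (rule wk_trans[OF W_x1[OF x] Wout[OF z False]])
    then show ?thesis by (rule wk_mono) simp
  qed
qed

lemma UB2: assumes x: "x \<in> V2" "x \<noteq> v" shows "ecc GV GE' x \<le> max (ecc V2 E2 x) (D2 x + k)"
proof (rule ecc_le[OF finGV GVne])
  fix z assume z: "z \<in> GV"
  show "wk GV GE' x z (max (ecc V2 E2 x) (D2 x + k))"
  proof (cases "z \<in> V2 \<and> z \<noteq> v")
    case True
    have "wk GV GE' (sg x) (sg z) (dist V2 E2 x z)" by (rule H2G'[OF reach2[OF x(1)]]) (use True in simp)
    then have "wk GV GE' x z (dist V2 E2 x z)" using sg_o x(2) True by simp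
    then show ?thesis by (rule wk_mono) (use ecc_ge[OF fin2, of z E2 x] True in simp)
  next
    case False
    have xw: "wk GV GE' x w (D2 x)" using W_x2[OF x(1)] sg_o[OF x(2)] by simp
    have "wk GV GE' w z k"
    proof -
      consider "z \<in> V1" | "z = v" | i where "1 \<le> i" "i \<le> l" "z = u i"
        using GV_cases[OF z] False by blast
      then show ?thesis
      proof cases
        case 1 then show ?thesis using wk_mono[OF W_1x[OF 1]] D1k[OF 1] by simp
      next
        case 2 then show ?thesis using wk_mono[OF W_wv] kl by simp
      next
        case 3
        have "wk GV GE' w z (1 + i)" using wk_trans[OF W_wv upathG'[OF 3(1,2)]] 3(3) by simp
        then show ?thesis by (rule wk_mono) (use 3 kl in simp)
      qed
    qed
    then have "wk GV GE' x z (D2 x + k)" by (rule wk_trans[OF xw])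
    then show ?thesis by (rule wk_mono) simp
  qed
qed

lemma W_v: "z \<in> GV \<Longrightarrow> wk GV GE' v z (1 + max k m)"
  by (rule wk_trans[OF W_vw Wall])

lemma UB3: "ecc GV GE' v \<le> 1 + max k m"
  by (rule ecc_le[OF finGV GVne W_v])

lemma UB4: assumes i: "1 \<le> i" "i \<le> l" shows "ecc GV GE' (u i) \<le> i + (1 + max k m)"
  by (rule ecc_le[OF finGV GVne wk_trans[OF wk_sym[OF upathG'[OF i]] W_v]])

lemma UBw: "ecc GV GE' w \<le> max k m"
  by (rule ecc_le[OF finGV GVne Wall])

lemma pos': assumes x: "x \<in> GV" shows "1 \<le> ecc GV GE' x"
proof (cases "x = w")
  case True
  show ?thesis using ecc_pos[OF finGV subsetD[OF V2GV vV2] wk_reach[OF W_wv]] wv True by simp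
next
  case False
  have "wk GV GE' w x (max k m)" by (rule Wall[OF x])
  then have "reach GV GE' x w" by (rule wk_reach[OF wk_sym])
  then show ?thesis using ecc_pos[OF finGV subsetD[OF V1GV wV1]] False by simp
qed

lemma posG: assumes x: "x \<in> GV" shows "1 \<le> ecc GV GE x"
proof (cases "x = w")
  case True
  show ?thesis using ecc_pos[OF finGV subsetD[OF V2GV vV2] reachG[OF x subsetD[OF V2GV vV2]]] wv True by simp
next
  case False
  then show ?thesis using ecc_pos[OF finGV subsetD[OF V1GV wV1] reachG[OF x subsetD[OF V1GV wV1]]] by simp
qed

lemma CMP: assumes x: "x \<in> V1 \<union> V2" "x \<noteq> v" shows "ecc GV GE' x \<le> ecc GV GE x"
proof (cases "x \<in> V1")
  case True
  show ?thesis using UB1[OF True] LB1[OF True] LB3[OF True] LB4[OF True] by simp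
next
  case False
  then have x2: "x \<in> V2" using x by blast
  show ?thesis using UB2[OF x2 x(2)] LB2[OF x2] LB5[OF x2] by simp
qed

end



lemma walk_take: assumes "walk V E xs" "j < length xs" shows "wk V E (hd xs) (xs ! j) j"
proof -
  have "walk V E (take (Suc j) xs)"
    using assms unfolding walk_def by (auto dest: in_set_takeD)
  moreover have "hd (take (Suc j) xs) = hd xs" using assms(1) unfolding walk_def by simp
  moreover have "last (take (Suc j) xs) = xs ! j" using assms(2)
  proof -
    have "length xs - Suc 0 = j" if "length xs \<le> Suc j" using that assms(2) by linarith
    then show ?thesis using assms(2) by (subst last_conv_nth) (auto simp: min_def)
  qed
  moreover have "length (take (Suc j) xs) \<le> Suc j" by simp
  ultimately show ?thesis unfolding wk_def by blast
qed

lemma walk_drop: assumes "walk V E xs" "j < length xs" shows "wk V E (xs ! j) (last xs) (length xs - 1 - j)"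
proof -
  have "walk V E (drop j xs)"
    using assms unfolding walk_def by (auto dest: in_set_dropD)
  moreover have "hd (drop j xs) = xs ! j" using assms(2) by (simp add: hd_drop_conv_nth)
  moreover have "last (drop j xs) = last xs" using assms(2) by simp
  moreover have "length (drop j xs) \<le> Suc (length xs - 1 - j)" by simp
  ultimately show ?thesis unfolding wk_def by blast
qed

context gsetup
begin

lemma nbrs_sub: assumes "\<And>e. e \<in> F \<Longrightarrow> e \<subseteq> GV" shows "nbrs F x \<subseteq> GV"
  unfolding nbrs_def using assms by blast

lemma finN: "finite (nbrs GE x)" by (rule finite_subset[OF nbrs_sub[OF GE_sub] finGV])
lemma finN': "finite (nbrs GE' x)" by (rule finite_subset[OF nbrs_sub[OF GE'_sub] finGV])

lemma DG1: assumes "x \<notin> N" "x \<noteq> v" shows "nbrs GE x \<subseteq> nbrs GE' x"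
proof
  fix y assume "y \<in> nbrs GE x"
  then have e: "{x,y} \<in> GE" unfolding nbrs_def by simp
  have "{x,y} \<notin> {{v, x'} | x'. x' \<in> N}" using assms by (auto simp: doubleton_eq_iff)
  then show "y \<in> nbrs GE' x" using e unfolding nbrs_def GE'_def by blast
qed

lemma GE_w_V2: assumes "{x,w} \<in> GE" "x \<in> V2" shows "x = v"
proof -
  consider "{x,w} \<in> E1" | "{x,w} \<in> E2" | "{x,w} = {w,v}" | "{x,w} = {v, u 1}" |
    i where "1 \<le> i" "i < l" "{x,w} = {u i, u (Suc i)}" using GE_cases[OF assms(1)] by blast
  then show ?thesis
  proof cases
    case 1 then show ?thesis using e1[OF 1] assms(2) disj by blast
  next
    case 2 then show ?thesis using e2[OF 2] wv by blast
  next
    case 3 then show ?thesis using wv by (auto simp: doubleton_eq_iff)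
  next
    case 4 then show ?thesis using wv uin[of 1] l1 wV1 by (auto simp: doubleton_eq_iff)
  next
    case 5 then show ?thesis using uin[of i] uin[of "Suc i"] wV1 by (auto simp: doubleton_eq_iff)
  qed
qed

lemma DG: assumes x: "x \<in> GV" "x \<noteq> v" shows "degree GE x \<le> degree GE' x"
proof (cases "x \<in> N")
  case False
  then show ?thesis unfolding degree_def by (rule card_mono[OF finN' DG1[OF _ x(2)]])
next
  case True
  have xV2: "x \<in> V2" using True N_sub by blast
  define g where "g y = (if y = v then w else y)" for y
  have "inj_on g (nbrs GE x)"
  proof (rule inj_onI)
    fix a b assume ab: "a \<in> nbrs GE x" "b \<in> nbrs GE x" "g a = g b"
    have "w \<notin> nbrs GE x" using GE_w_V2[OF _ xV2] x(2) unfolding nbrs_def by auto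
    then show "a = b" using ab unfolding g_def by (auto split: if_splits)
  qed
  moreover have "g ` nbrs GE x \<subseteq> nbrs GE' x"
  proof
    fix z assume "z \<in> g ` nbrs GE x"
    then obtain y where y: "y \<in> nbrs GE x" "z = g y" by blast
    show "z \<in> nbrs GE' x"
    proof (cases "y = v")
      case True
      then show ?thesis using wN_GE'[OF \<open>x \<in> N\<close>] y unfolding g_def nbrs_def by (simp add: insert_commute)
    next
      case False
      have e: "{x,y} \<in> GE" using y unfolding nbrs_def by simp
      have "v \<notin> {x,y}" using False x(2) by simp
      then show ?thesis using GE'_keep[OF e] y False unfolding g_def nbrs_def by simp
    qed
  qed
  ultimately show ?thesis unfolding degree_def using card_inj_on_le[OF _ _ finN'] by blast
qed

lemma finNN: "finite N" using finite_subset[OF N_sub] fin2 by blast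

lemma Npos: "1 \<le> card N"
proof -
  obtain y where "{v,y} \<in> E2" using simple_nbr[OF s2 c2 card2 vV2] by blast
  then have "y \<in> N" unfolding N_def nbrs_def by simp
  then have "N \<noteq> {}" by blast
  then show ?thesis using finNN card_0_eq[OF finNN] by linarith
qed

lemma DGw: "degree GE w + card N \<le> degree GE' w"
proof -
  have s1: "nbrs GE w \<subseteq> nbrs GE' w" by (rule DG1[OF wN wv(1)])
  have s2: "N \<subseteq> nbrs GE' w"
  proof
    fix y assume "y \<in> N" then show "y \<in> nbrs GE' w" using wN_GE' unfolding nbrs_def by simp
  qed
  have dj: "nbrs GE w \<inter> N = {}"
  proof -
    { fix y assume y: "y \<in> nbrs GE w" "y \<in> N"
      then have "{y,w} \<in> GE" unfolding nbrs_def by (simp add: insert_commute)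
      moreover have "y \<in> V2" "y \<noteq> v" using y(2) N_sub by auto
      ultimately have False using GE_w_V2 by simp }
    then show ?thesis by blast
  qed
  have "card (nbrs GE w) + card N = card (nbrs GE w \<union> N)" by (rule card_Un_disjoint[OF finN finNN dj, symmetric])
  also have "\<dots> \<le> card (nbrs GE' w)" by (rule card_mono[OF finN']) (use s1 s2 in blast)
  finally show ?thesis unfolding degree_def .
qed

lemma DGv: "degree GE v \<le> card N + 2"
proof -
  have "nbrs GE v \<subseteq> N \<union> {w, u 1}"
  proof
    fix y assume "y \<in> nbrs GE v"
    then have e: "{v,y} \<in> GE" unfolding nbrs_def by simp
    consider "{v,y} \<in> E1" | "{v,y} \<in> E2" | "{v,y} = {w,v}" | "{v,y} = {v, u 1}" |
      i where "1 \<le> i" "i < l" "{v,y} = {u i, u (Suc i)}" using GE_cases[OF e] by blast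
    then show "y \<in> N \<union> {w, u 1}"
    proof cases
      case 1 then show ?thesis using e1[OF 1] wv by blast
    next
      case 2 then show ?thesis unfolding N_def nbrs_def by simp
    next
      case 3 then show ?thesis by (auto simp: doubleton_eq_iff)
    next
      case 4 then show ?thesis by (auto simp: doubleton_eq_iff)
    next
      case 5 then show ?thesis using uin[of i] uin[of "Suc i"] vV2 by (auto simp: doubleton_eq_iff)
    qed
  qed
  then have "card (nbrs GE v) \<le> card (N \<union> {w, u 1})" by (rule card_mono[rotated]) (use finNN in simp)
  also have "\<dots> \<le> card N + card {w, u 1}" by (rule card_Un_le)
  also have "card {w, u 1} \<le> 2" by (simp add: card_insert_le_m1)
  finally show ?thesis unfolding degree_def by simp
qed

lemma DGv': "2 \<le> degree GE' v"
proof -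
  have "{w, u 1} \<subseteq> nbrs GE' v" using wv_GE' vu_GE' unfolding nbrs_def by (auto simp: insert_commute)
  then have c: "card {w, u 1} \<le> card (nbrs GE' v)" by (rule card_mono[OF finN'])
  have "w \<noteq> u 1" using uin[of 1] l1 wV1 by auto
  then have "card {w, u 1} = 2" by simp
  note c this
  then show ?thesis unfolding degree_def by linarith
qed

lemma DGu: assumes i: "1 \<le> i" "i \<le> l" shows "degree GE (u i) \<le> 2"
proof -
  have "nbrs GE (u i) \<subseteq> {if i = 1 then v else u (i - 1), u (Suc i)}"
  proof
    fix y assume "y \<in> nbrs GE (u i)"
    then have e: "{u i, y} \<in> GE" unfolding nbrs_def by simp
    have ui: "u i \<notin> V1" "u i \<notin> V2" using uin[OF i] by auto
    consider "{u i,y} \<in> E1" | "{u i,y} \<in> E2" | "{u i,y} = {w,v}" | "{u i,y} = {v, u 1}" |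
      j where "1 \<le> j" "j < l" "{u i,y} = {u j, u (Suc j)}" using GE_cases[OF e] by blast
    then show "y \<in> {if i = 1 then v else u (i - 1), u (Suc i)}"
    proof cases
      case 1 then show ?thesis using e1[OF 1] ui by blast
    next
      case 2 then show ?thesis using e2[OF 2] ui by blast
    next
      case 3 then show ?thesis using ui wV1 vV2 by (auto simp: doubleton_eq_iff)
    next
      case 4
      then have "u i = u 1 \<and> y = v" using ui vV2 by (auto simp: doubleton_eq_iff)
      then show ?thesis using u_eq[OF i, of 1] l1 by simp
    next
      case 5
      then have "(u i = u j \<and> y = u (Suc j)) \<or> (u i = u (Suc j) \<and> y = u j)" by (auto simp: doubleton_eq_iff)
      then show ?thesis
      proof
        assume "u i = u j \<and> y = u (Suc j)" then show ?thesis using u_eq[OF i, of j] 5 by simp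
      next
        assume "u i = u (Suc j) \<and> y = u j" then show ?thesis using u_eq[OF i, of "Suc j"] 5 by simp
      qed
    qed
  qed
  then have "card (nbrs GE (u i)) \<le> card {if i = 1 then v else u (i - 1), u (Suc i)}" by (rule card_mono[rotated]) simp
  also have "\<dots> \<le> 2" by (simp add: card_insert_le_m1)
  finally show ?thesis unfolding degree_def .
qed

lemma DGw2: "2 \<le> degree GE w"
proof -
  obtain y where y: "{w,y} \<in> E1" "y \<in> V1" using simple_nbr[OF s1 c1 card1 wV1] by blast
  have "{w,y} \<in> GE" using y(1) E1_GE by blast
  then have "{y, v} \<subseteq> nbrs GE w" using wv_GE unfolding nbrs_def by simp
  then have c: "card {y, v} \<le> card (nbrs GE w)" by (rule card_mono[OF finN])
  have "y \<noteq> v" using y wv by blast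
  then have "card {y, v} = 2" by simp
  note c this
  then show ?thesis unfolding degree_def by linarith
qed

lemma spath: "\<exists>ys. length ys = Suc k \<and> (\<forall>j\<le>k. ys ! j \<in> V1 \<and> D1 (ys ! j) = j) \<and>
   (\<forall>j<k. {ys ! j, ys ! Suc j} \<in> E1)"
proof -
  obtain z where z: "z \<in> V1" "D1 z = k" using z1 by blast
  have "wk V1 E1 w z k" using reach1[OF wV1 z(1)] z(2) unfolding D1_def by simp
  then obtain ys where ys: "walk V1 E1 ys" "hd ys = w" "last ys = z" "length ys \<le> Suc k"
    unfolding wk_def by blast
  have ne: "ys \<noteq> []" using ys(1) unfolding walk_def by simp
  have "k \<le> length ys - 1"
  proof -
    have "wk V1 E1 w z (length ys - 1)" unfolding wk_def using ys ne by (intro exI[of _ ys]) auto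
    then show ?thesis using wk_dist z(2) unfolding D1_def by fastforce
  qed
  then have len: "length ys = Suc k" using ys(4) ne by (cases ys) auto
  have mem: "ys ! j \<in> V1" if "j \<le> k" for j using ys(1) len that unfolding walk_def by (auto simp: nth_mem subset_iff)
  have "D1 (ys ! j) = j" if j: "j \<le> k" for j
  proof -
    have a: "wk V1 E1 w (ys ! j) j" using walk_take[OF ys(1), of j] ys(2) len j by simp
    have "D1 (ys ! j) \<le> j" using wk_dist[OF a] unfolding D1_def .
    moreover
    have b: "wk V1 E1 (ys ! j) z (k - j)" using walk_drop[OF ys(1), of j] ys(3) len j by simp
    have "wk V1 E1 w z (D1 (ys ! j) + (k - j))"
      using wk_trans[OF reach1[OF wV1 mem[OF j]] b] unfolding D1_def .
    then have "k \<le> D1 (ys ! j) + (k - j)" using wk_dist z(2) unfolding D1_def by metis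
    ultimately show ?thesis using j by linarith
  qed
  moreover have "{ys ! j, ys ! Suc j} \<in> E1" if "j < k" for j
    using ys(1) len that unfolding walk_def by auto
  ultimately show ?thesis using len mem by blast
qed

end



lemma ar_key: fixes d d' e e' A B :: real
  assumes "0 < e'" "e' \<le> A" "0 < B" "B \<le> e" "0 \<le> d" "0 \<le> d'"
  shows "d'/A - d/B \<le> d'/e' - d/e"
proof -
  have "d'/A \<le> d'/e'" using assms by (intro divide_left_mono) auto
  moreover have "d/e \<le> d/B" using assms by (intro divide_left_mono) auto
  ultimately show ?thesis by linarith
qed

lemma ar1: fixes d a :: real assumes "0 \<le> d" "d \<le> 2" "0 < a"
  shows "2/(a+1) - 2/a \<le> d/(a+1) - d/a"
proof -
  have "2/(a+1) - 2/a = -2/(a*(a+1))" "d/(a+1) - d/a = -d/(a*(a+1))" using assms by (auto simp: field_simps)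
  moreover have "d/(a*(a+1)) \<le> 2/(a*(a+1))" using assms by (intro divide_right_mono) auto
  ultimately show ?thesis by simp
qed

lemma ar2: fixes d a c :: real assumes "c \<le> d" "0 < a"
  shows "c/a - c/(a+1) \<le> d/a - d/(a+1)"
proof -
  have "c/a - c/(a+1) = c/(a*(a+1))" "d/a - d/(a+1) = d/(a*(a+1))" using assms by (auto simp: field_simps)
  moreover have "c/(a*(a+1)) \<le> d/(a*(a+1))" using assms by (intro divide_right_mono) auto
  ultimately show ?thesis by simp
qed

lemma ar3: fixes M d :: real assumes "0 < M"
 shows "d / (M * (M + 1)) = d / M - d / (M + 1)"
proof -
  have "d / M - d / (M + 1) = (d * (M + 1) - d * M) / (M * (M + 1))" using assms
    by (simp add: diff_frac_eq)
  also have "d * (M + 1) - d * M = d" by (simp add: algebra_simps)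
  finally show ?thesis by simp
qed

context gsetup
begin

definition "f x = real (degree GE x) / real (ecc GV GE x)"
definition "f' x = real (degree GE' x) / real (ecc GV GE' x)"

lemma P0: assumes x: "x \<in> V1 \<union> V2" "x \<noteq> v" shows "f x \<le> f' x"
proof -
  have xG: "x \<in> GV" using x V1GV V2GV by blast
  show ?thesis unfolding f_def f'_def
    by (rule frac_le) (use DG[OF xG x(2)] CMP[OF x] pos'[OF xG] in auto)
qed

lemma xi_diff: "xi_ee GV GE' - xi_ee GV GE = (\<Sum>x\<in>GV. f' x - f x)"
  unfolding xi_ee_def f_def f'_def by (simp add: sum_subtractf)

lemma case1: assumes mk: "m \<le> k" shows "xi_ee GV GE < xi_ee GV GE'"
proof -
  define Nr where "Nr = real (card N)"
  have kpos: "(2::real) \<le> real k" using kl l1 by simp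
  have Nr1: "1 \<le> Nr" unfolding Nr_def using Npos by simp
  define c where "c x = (if x = w then Nr / real k else 0) + (if x = v then - (Nr / (real k + 1)) else 0)" for x
  have pt: "c x \<le> f' x - f x" if x: "x \<in> GV" for x
  proof -
    consider "x = w" | "x = v" | i where "1 \<le> i" "i \<le> l" "x = u i" | "x \<in> V1 \<union> V2" "x \<noteq> v" "x \<noteq> w"
      using GV_cases[OF x] by blast
    then show ?thesis
    proof cases
      case 1
      have e': "real (ecc GV GE' w) \<le> real k" using UBw mk by simp
      have e: "real k \<le> real (ecc GV GE w)" using LB1[OF wV1] kdef by simp
      have d: "real (degree GE w) + Nr \<le> real (degree GE' w)" using DGw unfolding Nr_def by simp
      have "real (degree GE' w) / real k - real (degree GE w) / real k \<le> f' w - f w"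
        unfolding f_def f'_def using pos'[OF subsetD[OF V1GV wV1]] e e' kpos by (intro ar_key) auto
      moreover have "(real (degree GE w) + Nr) / real k \<le> real (degree GE' w) / real k"
        using d kpos by (intro divide_right_mono) auto
      moreover have "c w = Nr / real k" unfolding c_def using wv by simp
      ultimately show ?thesis using 1 kpos by (simp add: diff_divide_distrib add_divide_distrib)
    next
      case 2
      have e': "real (ecc GV GE' v) \<le> real k + 1" using UB3 mk by simp
      have e: "real k + 1 \<le> real (ecc GV GE v)" using LB5[OF vV2] D2v by simp
      have "real (degree GE' v) / (real k + 1) - real (degree GE v) / (real k + 1) \<le> f' v - f v"
        unfolding f_def f'_def using pos'[OF subsetD[OF V2GV vV2]] e e' kpos by (intro ar_key) auto
      moreover have "2 / (real k + 1) \<le> real (degree GE' v) / (real k + 1)"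
        using DGv' kpos by (intro divide_right_mono) auto
      moreover have "real (degree GE v) / (real k + 1) \<le> (Nr + 2) / (real k + 1)"
        using DGv kpos unfolding Nr_def by (intro divide_right_mono) auto
      moreover have "c v = - (Nr / (real k + 1))" unfolding c_def using wv by simp
      moreover have "2 / (real k + 1) - (Nr + 2) / (real k + 1) = - (Nr / (real k + 1))"
        by (simp add: diff_divide_distrib[symmetric])
      ultimately show ?thesis unfolding 2 by linarith
    next
      case 3
      have ui: "u i \<in> GV" "u i \<noteq> v" "u i \<noteq> w" using uin[OF 3(1,2)] vV2 wV1 by auto
      have "ecc GV GE' (u i) \<le> ecc GV GE (u i)" using UB4[OF 3(1,2)] LB6[OF 3(1,2)] mk by simp
      then have "f (u i) \<le> f' (u i)" unfolding f_def f'_def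
        by (intro frac_le) (use DG[OF ui(1,2)] pos'[OF ui(1)] in auto)
      moreover have "c (u i) = 0" unfolding c_def using ui by simp
      ultimately show ?thesis using 3 by simp
    next
      case 4
      have "c x = 0" unfolding c_def using 4 by simp
      then show ?thesis using P0[OF 4(1,2)] by simp
    qed
  qed
  have "(\<Sum>x\<in>GV. c x) = Nr / real k - Nr / (real k + 1)"
    unfolding c_def using finGV subsetD[OF V1GV wV1] subsetD[OF V2GV vV2] by (simp add: sum.distrib)
  also have "\<dots> > 0"
  proof -
    have "Nr / (real k + 1) < Nr / real k" using kpos Nr1 by (intro divide_strict_left_mono) auto
    then show ?thesis by simp
  qed
  finally have "0 < (\<Sum>x\<in>GV. c x)" .
  also have "\<dots> \<le> (\<Sum>x\<in>GV. f' x - f x)" by (rule sum_mono[OF pt])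
  finally show ?thesis using xi_diff by simp
qed

end



context gsetup
begin

lemma case2: assumes mk: "k < m" shows "xi_ee GV GE < xi_ee GV GE'"
proof -
  obtain ys where ys: "length ys = Suc k" "\<And>j. j \<le> k \<Longrightarrow> ys ! j \<in> V1 \<and> D1 (ys ! j) = j"
    "\<And>j. j < k \<Longrightarrow> {ys ! j, ys ! Suc j} \<in> E1" using spath by blast
  define Nr where "Nr = real (card N)"
  define M where "M = real m"
  have k2: "2 \<le> k" using kl l1 by simp
  have Mpos: "(3::real) \<le> M" unfolding M_def using mk k2 by simp
  have mpos: "(0::real) < real m" using mk by simp
  have Nr1: "1 \<le> Nr" unfolding Nr_def using Npos by simp
  have mx: "max k m = m" using mk by simp
  define Y where "Y = (\<lambda>j. ys ! j) ` {1..l}"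
  define yk where "yk = ys ! k"
  define h1 where "h1 j = 2 / real (j + m + 1) - 2 / real (j + m)" for j
  define h2 where "h2 j = 2 / real (j + m) - 2 / real (j + m + 1)" for j
  define g where "g = 1 / real (k + m) - 1 / real (k + m + 1)"
  define cw where "cw = Nr / M + 2 / (M * (M + 1))"
  define cv where "cv = 2 / (M + 1) - (Nr + 2) / M"
  define c where "c x = (if x = w then cw else 0) + (if x = v then cv else 0) +
      (if x \<in> U then h1 (ui x) else 0) + (if x \<in> Y then h2 (D1 x) else 0) + (if x = yk then g else 0)" for x
  have Y1: "x \<in> V1" "1 \<le> D1 x" "D1 x \<le> l" if "x \<in> Y" for x
    using that ys(2) kl unfolding Y_def by force+
  have yk1: "yk \<in> V1" "D1 yk = k" using ys(2)[of k] unfolding yk_def by auto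
  have U1: "x \<notin> V1" "x \<notin> V2" if "x \<in> U" for x using that uV unfolding U_def by auto
  have wnot: "w \<noteq> v" "w \<notin> U" "w \<notin> Y" "w \<noteq> yk"
  proof -
    show "w \<noteq> v" by (rule wv(1))
    show "w \<notin> U" using U1 wV1 by blast
    show "w \<notin> Y" using Y1(2) D1w by fastforce
    show "w \<noteq> yk" using yk1(2) D1w k2 by auto
  qed
  have vnot: "v \<notin> U" "v \<notin> Y" "v \<noteq> yk" using U1 Y1 yk1 vV2 wv by blast+
  have Unot: "x \<notin> Y" "x \<noteq> yk" if "x \<in> U" for x using U1 Y1 yk1 that by blast+
  have Ynot: "x \<noteq> yk" if "x \<in> Y" for x using Y1[OF that] yk1 kl by auto
  have pt: "c x \<le> f' x - f x" if x: "x \<in> GV" for x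
  proof -
    have xx: "x \<in> V1 \<union> V2 \<or> x \<in> U" using x unfolding GV_def U_def by blast
    consider "x = w" | "x = v" | "x \<in> U" | "x \<in> Y" | "x = yk" | "x \<in> V1 \<union> V2" "x \<noteq> v" "x \<noteq> w" "x \<notin> Y" "x \<noteq> yk"
      using xx by blast
    then show ?thesis
    proof cases
      case 1
      have cx: "c x = cw" unfolding c_def 1 using wnot by simp
      have e': "real (ecc GV GE' w) \<le> M" using UBw mx unfolding M_def by simp
      have e: "M + 1 \<le> real (ecc GV GE w)" using LB3[OF wV1] D1w unfolding M_def by simp
      have d: "real (degree GE w) + Nr \<le> real (degree GE' w)" using DGw unfolding Nr_def by simp
      have d2: "2 \<le> real (degree GE w)" using DGw2 by simp
      have "real (degree GE' w) / M - real (degree GE w) / (M + 1) \<le> f' w - f w"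
        unfolding f_def f'_def using pos'[OF subsetD[OF V1GV wV1]] e e' Mpos mpos by (intro ar_key) auto
      moreover have "(real (degree GE w) + Nr) / M \<le> real (degree GE' w) / M"
        using d Mpos by (intro divide_right_mono) auto
      moreover have "cw \<le> (real (degree GE w) + Nr) / M - real (degree GE w) / (M + 1)"
      proof -
        have "(real (degree GE w) + Nr) / M - real (degree GE w) / (M + 1)
              = Nr / M + real (degree GE w) / (M * (M + 1))" using Mpos by (simp add: ar3 add_divide_distrib)
        moreover have "2 / (M * (M + 1)) \<le> real (degree GE w) / (M * (M + 1))"
          using d2 Mpos by (intro divide_right_mono) auto
        ultimately show ?thesis unfolding cw_def by linarith
      qed
      ultimately show ?thesis using cx unfolding 1 by linarith
    next
      case 2
      have cx: "c x = cv" unfolding c_def 2 using vnot wv by simp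
      have e': "real (ecc GV GE' v) \<le> M + 1" using UB3 mx unfolding M_def by simp
      have e: "M \<le> real (ecc GV GE v)" using LB2[OF vV2] unfolding M_def m_def by simp
      have "real (degree GE' v) / (M + 1) - real (degree GE v) / M \<le> f' v - f v"
        unfolding f_def f'_def using pos'[OF subsetD[OF V2GV vV2]] e e' Mpos mpos by (intro ar_key) auto
      moreover have "2 / (M + 1) \<le> real (degree GE' v) / (M + 1)"
        using DGv' Mpos by (intro divide_right_mono) auto
      moreover have "real (degree GE v) / M \<le> (Nr + 2) / M"
        using DGv Mpos unfolding Nr_def by (intro divide_right_mono) auto
      ultimately show ?thesis using cx unfolding 2 cv_def by linarith
    next
      case 3
      then obtain j where j: "1 \<le> j" "j \<le> l" "x = u j" unfolding U_def by auto
      have cx: "c x = h1 j" unfolding c_def using 3 Unot[OF 3] wnot vnot ui_u[OF j(1,2)] j(3) by auto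
      have xG: "x \<in> GV" "x \<noteq> v" using 3 vnot x by auto
      have e': "real (ecc GV GE' x) \<le> real (j + m) + 1" using UB4[OF j(1,2)] mx j(3) by simp
      have e: "real (j + m) \<le> real (ecc GV GE x)" using LB7[OF j(1,2)] j(3) by simp
      have "f x \<le> real (degree GE x) / real (ecc GV GE x)" unfolding f_def by simp
      have "real (degree GE x) / (real (j + m) + 1) - real (degree GE x) / real (j + m)
          \<le> real (degree GE x) / real (ecc GV GE' x) - real (degree GE x) / real (ecc GV GE x)"
        using pos'[OF xG(1)] e e' Mpos mpos by (intro ar_key) auto
      moreover have "real (degree GE x) / real (ecc GV GE' x) \<le> f' x"
        unfolding f'_def by (rule frac_le) (use DG[OF xG] pos'[OF xG(1)] in auto)
      moreover have "h1 j \<le> real (degree GE x) / (real (j + m) + 1) - real (degree GE x) / real (j + m)"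
      proof -
        have "h1 j = 2 / (real (j + m) + 1) - 2 / real (j + m)" unfolding h1_def by (simp only: of_nat_add[of "j+m" 1] of_nat_1)
        moreover have "real (degree GE x) \<le> 2" using DGu[OF j(1,2)] j(3) by simp
        moreover have "0 < real (j + m)" using mpos by simp
        ultimately show ?thesis using ar1[of "real (degree GE x)" "real (j + m)"] by simp
      qed
      ultimately show ?thesis unfolding cx f_def by linarith
    next
      case 4
      then obtain j where j: "1 \<le> j" "j \<le> l" "x = ys ! j" unfolding Y_def by auto
      have jk: "j < k" using j kl by simp
      have xV: "x \<in> V1" "D1 x = j" using ys(2)[of j] j jk by auto
      have cx: "c x = h2 j" unfolding c_def using 4 Ynot[OF 4] wnot vnot U1 xV by auto
      have xG: "x \<in> GV" "x \<noteq> v" using xV V1GV wv by auto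
      have "ecc GV GE' x \<le> max (ecc V1 E1 x) (D1 x + max m (l + 1))" by (rule UB1[OF xV(1)])
      moreover have "ecc V1 E1 x \<le> D1 x + k" by (rule e1_le[OF xV(1)])
      ultimately have e': "real (ecc GV GE' x) \<le> real (j + m)" using xV mk kl by simp
      have e: "real (j + m) + 1 \<le> real (ecc GV GE x)" using LB3[OF xV(1)] xV by simp
      have d2: "2 \<le> real (degree GE x)"
      proof -
        have a: "{ys ! (j - 1), ys ! j} \<in> E1" "{ys ! j, ys ! Suc j} \<in> E1" using ys(3)[of "j-1"] ys(3)[of j] j jk by auto
        have "{ys ! (j - 1), ys ! Suc j} \<subseteq> nbrs GE x" using a E1_GE j(3) unfolding nbrs_def
          by (auto simp: insert_commute)
        then have c: "card {ys ! (j - 1), ys ! Suc j} \<le> card (nbrs GE x)" by (rule card_mono[OF finN])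
        have "D1 (ys ! (j - 1)) = j - 1" "D1 (ys ! Suc j) = Suc j" using ys(2)[of "j - 1"] ys(2)[of "Suc j"] jk by auto
        then have "ys ! (j - 1) \<noteq> ys ! Suc j" using j by auto
        then have "card {ys ! (j - 1), ys ! Suc j} = 2" by simp
        then show ?thesis using c unfolding degree_def by simp
      qed
      have "real (degree GE x) / real (j + m) - real (degree GE x) / (real (j + m) + 1)
          \<le> real (degree GE x) / real (ecc GV GE' x) - real (degree GE x) / real (ecc GV GE x)"
        using pos'[OF xG(1)] e e' Mpos mpos by (intro ar_key) auto
      moreover have "real (degree GE x) / real (ecc GV GE' x) \<le> f' x"
        unfolding f'_def by (rule frac_le) (use DG[OF xG] pos'[OF xG(1)] in auto)
      moreover have "h2 j \<le> real (degree GE x) / real (j + m) - real (degree GE x) / (real (j + m) + 1)"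
      proof -
        have "h2 j = 2 / real (j + m) - 2 / (real (j + m) + 1)" unfolding h2_def by (simp only: of_nat_add[of "j+m" 1] of_nat_1)
        moreover have "0 < real (j + m)" using mpos by simp
        ultimately show ?thesis using ar2[of 2 "real (degree GE x)" "real (j + m)"] d2 by simp
      qed
      ultimately show ?thesis unfolding cx f_def by linarith
    next
      case 5
      have cx: "c x = g" unfolding c_def 5 using wnot vnot Unot Ynot yk1 U1 by auto
      have xG: "x \<in> GV" "x \<noteq> v" using yk1 V1GV wv 5 by auto
      have "ecc GV GE' x \<le> max (ecc V1 E1 x) (D1 x + max m (l + 1))" by (rule UB1[OF yk1(1)[folded 5]])
      moreover have "ecc V1 E1 x \<le> D1 x + k" by (rule e1_le[OF yk1(1)[folded 5]])
      ultimately have e': "real (ecc GV GE' x) \<le> real (k + m)" using yk1 5 mk kl by simp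
      have e: "real (k + m) + 1 \<le> real (ecc GV GE x)" using LB3[OF yk1(1)] yk1 5 by simp
      have d1: "1 \<le> real (degree GE x)"
      proof -
        have a: "{ys ! (k - 1), ys ! k} \<in> E1" using ys(3)[of "k-1"] k2 by auto
        have "{ys ! (k - 1)} \<subseteq> nbrs GE x" using a E1_GE 5 unfolding nbrs_def yk_def
          by (auto simp: insert_commute)
        then have c: "card {ys ! (k - 1)} \<le> card (nbrs GE x)" by (rule card_mono[OF finN])
        then show ?thesis unfolding degree_def by simp
      qed
      have "real (degree GE x) / real (k + m) - real (degree GE x) / (real (k + m) + 1)
          \<le> real (degree GE x) / real (ecc GV GE' x) - real (degree GE x) / real (ecc GV GE x)"
        using pos'[OF xG(1)] e e' Mpos mpos by (intro ar_key) auto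
      moreover have "real (degree GE x) / real (ecc GV GE' x) \<le> f' x"
        unfolding f'_def by (rule frac_le) (use DG[OF xG] pos'[OF xG(1)] in auto)
      moreover have "g \<le> real (degree GE x) / real (k + m) - real (degree GE x) / (real (k + m) + 1)"
      proof -
        have "g = 1 / real (k + m) - 1 / (real (k + m) + 1)" unfolding g_def by (simp only: of_nat_add[of "k+m" 1] of_nat_1)
        moreover have "0 < real (k + m)" using mpos by simp
        ultimately show ?thesis using ar2[of 1 "real (degree GE x)" "real (k + m)"] d1 by simp
      qed
      ultimately show ?thesis unfolding cx f_def by linarith
    next
      case 6
      have "c x = 0" unfolding c_def using 6 U1 by auto
      then show ?thesis using P0[OF 6(1,2)] by simp
    qed
  qed
  have inY: "inj_on (\<lambda>j. ys ! j) {1..l}"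
  proof (rule inj_onI)
    fix a b assume ab: "a \<in> {1..l}" "b \<in> {1..l}" "ys ! a = ys ! b"
    have ak: "a \<le> k" and bk: "b \<le> k" using ab(1,2) kl by auto
    have "D1 (ys ! a) = a" using ys(2)[OF ak] by (rule conjunct2)
    moreover have "D1 (ys ! b) = b" using ys(2)[OF bk] by (rule conjunct2)
    ultimately show "a = b" using ab(3) by metis
  qed
  have UG: "U \<subseteq> GV" unfolding U_def GV_def by auto
  have YG: "Y \<subseteq> GV" using Y1 V1GV by blast
  have sU: "(\<Sum>x\<in>GV. if x \<in> U then h1 (ui x) else 0) = (\<Sum>j=1..l. h1 j)"
  proof -
    have "(\<Sum>x\<in>GV. if x \<in> U then h1 (ui x) else 0) = (\<Sum>x\<in>GV \<inter> U. h1 (ui x))"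
      by (rule sum.inter_restrict[OF finGV, symmetric])
    also have "GV \<inter> U = U" using UG by blast
    also have "(\<Sum>x\<in>U. h1 (ui x)) = (\<Sum>j=1..l. h1 (ui (u j)))" unfolding U_def by (rule sum.reindex[OF uinj, unfolded comp_def])
    also have "\<dots> = (\<Sum>j=1..l. h1 j)" by (rule sum.cong) (auto simp: ui_u)
    finally show ?thesis .
  qed
  have sY: "(\<Sum>x\<in>GV. if x \<in> Y then h2 (D1 x) else 0) = (\<Sum>j=1..l. h2 j)"
  proof -
    have "(\<Sum>x\<in>GV. if x \<in> Y then h2 (D1 x) else 0) = (\<Sum>x\<in>GV \<inter> Y. h2 (D1 x))"
      by (rule sum.inter_restrict[OF finGV, symmetric])
    also have "GV \<inter> Y = Y" using YG by blast
    also have "(\<Sum>x\<in>Y. h2 (D1 x)) = (\<Sum>j=1..l. h2 (D1 (ys ! j)))" unfolding Y_def by (rule sum.reindex[OF inY, unfolded comp_def])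
    also have "\<dots> = (\<Sum>j=1..l. h2 j)" by (rule sum.cong) (use ys(2) kl in auto)
    finally show ?thesis .
  qed
  have s0: "(\<Sum>j=1..l. h1 j) + (\<Sum>j=1..l. h2 j) = 0"
    unfolding sum.distrib[symmetric] h1_def h2_def by simp
  have cwv: "cw + cv = 0" unfolding cw_def cv_def using Mpos by (simp add: ar3 add_divide_distrib)
  have gpos: "0 < g"
  proof -
    have "1 / real (k + m + 1) < 1 / real (k + m)" using mk by (intro divide_strict_left_mono) auto
    then show ?thesis unfolding g_def by simp
  qed
  have "(\<Sum>x\<in>GV. c x) = cw + cv + (\<Sum>j=1..l. h1 j) + (\<Sum>j=1..l. h2 j) + g"
    unfolding c_def sum.distrib sU sY using finGV subsetD[OF V1GV wV1] subsetD[OF V2GV vV2] subsetD[OF V1GV yk1(1)]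
    by simp
  also have "\<dots> = g" using s0 cwv by simp
  finally have "0 < (\<Sum>x\<in>GV. c x)" using gpos by simp
  also have "\<dots> \<le> (\<Sum>x\<in>GV. f' x - f x)" by (rule sum_mono[OF pt])
  finally show ?thesis using xi_diff by simp
qed

lemma main: "xi_ee GV GE < xi_ee GV GE'"
  using case1 case2 by (cases "m \<le> k") auto

end


theorem theorem3p1:
  fixes V1 V2 :: "'a set" and E1 E2 :: "'a set set" and w v :: 'a
    and u :: "nat \<Rightarrow> 'a" and l k :: nat
  assumes "simple_graph V1 E1" "connected_graph V1 E1" "card V1 \<ge> 2"
    and "simple_graph V2 E2" "connected_graph V2 E2" "card V2 \<ge> 2"
    and "V1 \<inter> V2 = {}"
    and "w \<in> V1" "v \<in> V2"
    and "k = ecc V1 E1 w"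
    and "l \<ge> 1" "k \<ge> l + 1"
    and "inj_on u {1..l}" "u ` {1..l} \<inter> (V1 \<union> V2) = {}"
  shows "let V = V1 \<union> V2 \<union> u ` {1..l};
             E = E1 \<union> E2 \<union> {{w, v}, {v, u 1}} \<union> {{u i, u (Suc i)} | i. 1 \<le> i \<and> i < l};
             E' = (E - {{v, x} | x. x \<in> nbrs E2 v}) \<union> {{w, x} | x. x \<in> nbrs E2 v}
         in xi_ee V E < xi_ee V E'"
proof -
  interpret gsetup V1 V2 E1 E2 w v u l k using assms by unfold_locales
  show ?thesis using main unfolding Let_def GV_def GE_def GE'_def N_def .
qed

end
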